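(* Let $(X,\mathcal{O}(X))$ be a measurable space, $\mathcal{A}$ a unital $C^*$-algebra and $\mathcal{H}$ a Hilbert space. Let $\mathcal{I}:\mathcal{O}(X)\to CP(\mathcal{A},\mathcal{B}(\mathcal{H}))$ be a CP instrument with minimal bi-dilation $(\mathcal{K},\pi,E,V)$. Then for any $A\in\mathcal{O}(X)$, $\mathcal{I}(A)=0$ if and only if $(\pi E)(A)=0$. In particular, for $S\in\mathcal{O}(X)$, $\mathcal{I}$ is concentrated on $S$ if and only if $\pi E$ is concentrated on $S$.
   Context: A CP instrument is a map $\mathcal{I}$ from $\mathcal{O}(X)$ to the completely positive maps $\mathcal{A}\to\mathcal{B}(\mathcal{H})$ such that for all $a\in\mathcal{A}$, $h,k\in\mathcal{H}$, $A\mapsto\langle h,\mathcal{I}(A)(a)k\rangle$ is a countably additive complex measure; write $\mathcal{I}(A,a)=\mathcal{I}(A)(a)$. A minimal bi-dilation is a quadruple $(\mathcal{K},\pi,E,V)$ with $\pi:\mathcal{A}\to\mathcal{B}(\mathcal{K})$ a unital $*$-homomorphism, $E:\mathcal{O}(X)\to\mathcal{B}(\mathcal{K})$ a spectral measure commuting with $\pi$, $V\in\mathcal{B}(\mathcal{H},\mathcal{K})$, with $\mathcal{I}(A,a)=V^*\pi(a)E(A)V$ and $\overline{\mathrm{span}}\{\pi(a)E(A)Vh\}=\mathcal{K}$. $\pi E$ is the instrument $(\pi E)(A)(a)=\pi(a)E(A)$. An instrument $\mathcal{J}$ is concentrated on $S$ if $\mathcal{J}(A)=\mathcal{J}(A\cap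 S)$ for all $A\in\mathcal{O}(X)$. *)

theory Defs
  imports "HOL-Probability.Probability"
begin

class complex_vector = real_vector +
  fixes scaleC :: "complex \<Rightarrow> 'a \<Rightarrow> 'a" (infixr "*\<^sub>C" 75)
  assumes scaleC_add_right: "c *\<^sub>C (x + y) = c *\<^sub>C x + c *\<^sub>C y"
    and scaleC_add_left: "(c + d) *\<^sub>C x = c *\<^sub>C x + d *\<^sub>C x"
    and scaleC_scaleC: "c *\<^sub>C (d *\<^sub>C x) = (c * d) *\<^sub>C x"
    and scaleC_one: "1 *\<^sub>C x = x"
    and scaleR_scaleC: "r *\<^sub>R x = complex_of_real r *\<^sub>C x"

text \<open>Complex inner product space; the real inner product of the underlying real
  space (which induces norm and topology) is the real part of the complex one.\<close>
class complex_inner = complex_vector + real_inner +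
  fixes cinner :: "'a \<Rightarrow> 'a \<Rightarrow> complex"
  assumes cinner_cnj: "cinner x y = cnj (cinner y x)"
    and cinner_add_right: "cinner x (y + z) = cinner x y + cinner x z"
    and cinner_scaleC_right: "cinner x (c *\<^sub>C y) = c * cinner x y"
    and inner_Re_cinner: "inner x y = Re (cinner x y)"

class chilbert = complex_inner + complete_space

class cstar_algebra = complex_vector + real_normed_algebra_1 + banach +
  fixes cstar :: "'a \<Rightarrow> 'a"
  assumes norm_scaleC: "norm (c *\<^sub>C x) = cmod c * norm x"
    and scaleC_mult_left: "(c *\<^sub>C x) * y = c *\<^sub>C (x * y)"
    and scaleC_mult_right: "x * (c *\<^sub>C y) = c *\<^sub>C (x * y)"
    and cstar_cstar: "cstar (cstar x) = x"
    and cstar_add: "cstar (x + y) = cstar x + cstar y"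
    and cstar_scaleC: "cstar (c *\<^sub>C x) = cnj c *\<^sub>C cstar x"
    and cstar_mult: "cstar (x * y) = cstar y * cstar x"
    and cstar_identity: "norm (cstar x * x) = (norm x)^2"

definition clinear :: "('a::complex_vector \<Rightarrow> 'b::complex_vector) \<Rightarrow> bool" where
  "clinear f \<longleftrightarrow> (\<forall>x y. f (x + y) = f x + f y) \<and> (\<forall>c x. f (c *\<^sub>C x) = c *\<^sub>C f x)"

definition bounded_op :: "('a::complex_inner \<Rightarrow> 'b::complex_inner) \<Rightarrow> bool" where
  "bounded_op f \<longleftrightarrow> clinear f \<and> (\<exists>C. \<forall>x. norm (f x) \<le> C * norm x)"

definition cspan :: "'a::complex_vector set \<Rightarrow> 'a set" where
  "cspan S = {y. \<exists>F c. finite F \<and> F \<subseteq> S \<and> y = (\<Sum>s\<in>F. c s *\<^sub>C s)}"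

definition cnonneg :: "complex \<Rightarrow> bool" where
  "cnonneg z \<longleftrightarrow> Im z = 0 \<and> 0 \<le> Re z"

text \<open>Completely positive map A -> B(H): linear, B(H)-valued, and for every n the
  amplification to M_n(A) -> M_n(B(H)) = B(H^n) maps positive matrices Y^* Y to
  positive operators.\<close>
definition cp_map :: "('a::cstar_algebra \<Rightarrow> 'h::chilbert \<Rightarrow> 'h) \<Rightarrow> bool" where
  "cp_map \<phi> \<longleftrightarrow>
     (\<forall>a b. \<phi> (a + b) = (\<lambda>x. \<phi> a x + \<phi> b x)) \<and>
     (\<forall>c a. \<phi> (c *\<^sub>C a) = (\<lambda>x. c *\<^sub>C \<phi> a x)) \<and>
     (\<forall>a. bounded_op (\<phi> a)) \<and>
     (\<forall>(n::nat) (Y::nat \<Rightarrow> nat \<Rightarrow> 'a) (\<xi>::nat \<Rightarrow> 'h).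
        cnonneg (\<Sum>i<n. \<Sum>j<n. cinner (\<xi> i) (\<phi> (\<Sum>k<n. cstar (Y k i) * Y k j) (\<xi> j))))"

definition count_add :: "'x measure \<Rightarrow> ('x set \<Rightarrow> complex) \<Rightarrow> bool" where
  "count_add M \<mu> \<longleftrightarrow> (\<forall>F::nat \<Rightarrow> 'x set. range F \<subseteq> sets M \<longrightarrow> disjoint_family F \<longrightarrow>
      (\<lambda>n. \<mu> (F n)) sums \<mu> (\<Union>n. F n))"

definition cp_instrument ::
  "'x measure \<Rightarrow> ('x set \<Rightarrow> 'a::cstar_algebra \<Rightarrow> 'h::chilbert \<Rightarrow> 'h) \<Rightarrow> bool" where
  "cp_instrument M I \<longleftrightarrow> (\<forall>A\<in>sets M. cp_map (I A)) \<and>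
     (\<forall>a h k. count_add M (\<lambda>A. cinner h (I A a k)))"

definition star_hom :: "('a::cstar_algebra \<Rightarrow> 'k::chilbert \<Rightarrow> 'k) \<Rightarrow> bool" where
  "star_hom \<pi> \<longleftrightarrow>
     (\<forall>a b. \<pi> (a + b) = (\<lambda>x. \<pi> a x + \<pi> b x)) \<and>
     (\<forall>c a. \<pi> (c *\<^sub>C a) = (\<lambda>x. c *\<^sub>C \<pi> a x)) \<and>
     (\<forall>a. bounded_op (\<pi> a)) \<and>
     (\<forall>a b. \<pi> (a * b) = \<pi> a \<circ> \<pi> b) \<and> \<pi> 1 = id \<and>
     (\<forall>a x y. cinner (\<pi> a x) y = cinner x (\<pi> (cstar a) y))"

definition spectral_measure :: "'x measure \<Rightarrow> ('x set \<Rightarrow> 'k::chilbert \<Rightarrow> 'k) \<Rightarrow> bool" where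
  "spectral_measure M E \<longleftrightarrow>
     (\<forall>A\<in>sets M. bounded_op (E A) \<and> E A \<circ> E A = E A \<and>
        (\<forall>x y. cinner (E A x) y = cinner x (E A y))) \<and>
     E (space M) = id \<and>
     (\<forall>A\<in>sets M. \<forall>B\<in>sets M. E (A \<inter> B) = E A \<circ> E B) \<and>
     (\<forall>x y. count_add M (\<lambda>A. cinner x (E A y)))"

text \<open>Minimal bi-dilation (K, pi, E, V) of I; K is the type 'k. The identity
  I(A,a) = V^* pi(a) E(A) V is expressed through the defining property of the
  adjoint V^*: <h, V^* T k> = <V h, T V k>.\<close>
definition minimal_bidilation ::
  "'x measure \<Rightarrow> ('x set \<Rightarrow> 'a::cstar_algebra \<Rightarrow> 'h::chilbert \<Rightarrow> 'h)
    \<Rightarrow> ('a \<Rightarrow> 'k::chilbert \<Rightarrow> 'k) \<Rightarrow> ('x set \<Rightarrow> 'k \<Rightarrow> 'k) \<Rightarrow> ('h \<Rightarrow> 'k) \<Rightarrow> bool" where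
  "minimal_bidilation M I \<pi> E V \<longleftrightarrow>
     star_hom \<pi> \<and> spectral_measure M E \<and>
     (\<forall>A\<in>sets M. \<forall>a. \<pi> a \<circ> E A = E A \<circ> \<pi> a) \<and>
     bounded_op V \<and>
     (\<forall>A\<in>sets M. \<forall>a h k. cinner h (I A a k) = cinner (V h) (\<pi> a (E A (V k)))) \<and>
     closure (cspan {\<pi> a (E A (V h)) | a A h. A \<in> sets M}) = UNIV"

definition piE :: "('a \<Rightarrow> 'k \<Rightarrow> 'k) \<Rightarrow> ('x set \<Rightarrow> 'k \<Rightarrow> 'k) \<Rightarrow> 'x set \<Rightarrow> 'a \<Rightarrow> 'k \<Rightarrow> 'k" where
  "piE \<pi> E = (\<lambda>A a. \<pi> a \<circ> E A)"

definition concentrated :: "'x measure \<Rightarrow> ('x set \<Rightarrow> 'a \<Rightarrow> 'k \<Rightarrow> 'k) \<Rightarrow> 'x set \<Rightarrow> bool" where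
  "concentrated M J S \<longleftrightarrow> (\<forall>A\<in>sets M. J A = J (A \<inter> S))"

end

theory Submission
  imports Defs
begin

lemma cinner_zero_right: "cinner h (0::'a::complex_inner) = 0"
  using cinner_add_right[of h "0::'a" 0] by simp

lemma scaleC_zero_right: "c *\<^sub>C (0::'a::complex_vector) = 0"
  using scaleC_add_right[of c "0::'a" 0] by simp

lemma cinner_self_zero:
  fixes x :: "'a::complex_inner"
  assumes "cinner x x = 0" shows "x = 0"
proof -
  have "inner x x = 0" using assms by (simp add: inner_Re_cinner)
  thus ?thesis by simp
qed

lemma cinner_ext:
  fixes x y :: "'a::complex_inner"
  assumes "\<And>h. cinner h x = cinner h y" shows "x = y"
proof -
  have "cinner (x - y) x = cinner (x - y) (x - y) + cinner (x - y) y"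
    using cinner_add_right[of "x - y" "x - y" y] by simp
  hence "cinner (x - y) (x - y) = 0" using assms[of "x - y"] by simp
  hence "x - y = 0" by (rule cinner_self_zero)
  thus ?thesis by simp
qed

lemma count_add_empty:
  assumes "count_add M \<mu>" shows "\<mu> {} = 0"
proof -
  have r: "range (\<lambda>n::nat. {}) \<subseteq> sets M" by auto
  have d: "disjoint_family (\<lambda>n::nat. {})" by (simp add: disjoint_family_on_def)
  have "(\<lambda>n::nat. \<mu> {}) sums \<mu> (\<Union>n::nat. {})"
    using assms[unfolded count_add_def, rule_format, OF r d] .
  hence "summable (\<lambda>n::nat. \<mu> {})" by (simp add: sums_summable)
  hence "(\<lambda>n::nat. \<mu> {}) \<longlonglongrightarrow> 0" by (rule summable_LIMSEQ_zero)
  moreover have "(\<lambda>n::nat. \<mu> {}) \<longlonglongrightarrow> \<mu> {}" by simp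
  ultimately show ?thesis using LIMSEQ_unique by metis
qed

lemma count_add_Un:
  assumes "count_add M \<mu>" "A \<in> sets M" "B \<in> sets M" "A \<inter> B = {}"
  shows "\<mu> (A \<union> B) = \<mu> A + \<mu> B"
proof -
  define F where "F = (\<lambda>n::nat. if n = 0 then A else if n = 1 then B else {})"
  have r: "range F \<subseteq> sets M" using assms by (auto simp: F_def)
  have d: "disjoint_family F" using assms(4) unfolding disjoint_family_on_def F_def by auto
  have u: "(\<Union>n. F n) = A \<union> B" unfolding F_def by (auto split: if_splits)
  have "(\<lambda>n. \<mu> (F n)) sums \<mu> (A \<union> B)"
    using assms(1)[unfolded count_add_def, rule_format, OF r d] unfolding u .
  moreover have "(\<lambda>n. \<mu> (F n)) sums (\<Sum>n\<in>{0,1}. \<mu> (F n))"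
    by (rule sums_finite) (auto simp: F_def count_add_empty[OF assms(1)])
  ultimately have "\<mu> (A \<union> B) = (\<Sum>n\<in>{0,1}. \<mu> (F n))" by (rule sums_unique2)
  thus ?thesis by (simp add: F_def)
qed

lemma clinear_zero: assumes "clinear T" shows "T 0 = 0"
  using assms unfolding clinear_def by (metis add_cancel_right_right add_0)

lemma clinear_sum:
  assumes "clinear T" "finite F"
  shows "T (\<Sum>s\<in>F. c s *\<^sub>C s) = (\<Sum>s\<in>F. c s *\<^sub>C T s)"
  using assms(2)
proof (induction F rule: finite_induct)
  case empty then show ?case using clinear_zero[OF assms(1)] by simp
next
  case (insert x F)
  then show ?case using assms(1) unfolding clinear_def by simp
qed

lemma bounded_op_bounded_linear:
  assumes "bounded_op T" shows "bounded_linear T"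
proof -
  have l: "clinear T" and "\<exists>C. \<forall>x. norm (T x) \<le> C * norm x" using assms unfolding bounded_op_def by auto
  then obtain C where C: "\<And>x. norm (T x) \<le> C * norm x" by blast
  show ?thesis
  proof (rule bounded_linear_intro[where K = C])
    fix x y show "T (x + y) = T x + T y" using l unfolding clinear_def by simp
  next
    fix r x show "T (r *\<^sub>R x) = r *\<^sub>R T x" using l unfolding clinear_def by (simp add: scaleR_scaleC)
  next
    fix x show "norm (T x) \<le> norm x * C" using C[of x] by (simp add: mult.commute)
  qed
qed

lemma bounded_op_zero:
  fixes T :: "'a::chilbert \<Rightarrow> 'b::chilbert"
  assumes "clinear T" "continuous_on UNIV T" "\<And>x. x \<in> S \<Longrightarrow> T x = 0"
    "closure (cspan S) = UNIV"
  shows "T = (\<lambda>x. 0)"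
proof -
  have "cspan S \<subseteq> {x. T x = 0}"
  proof
    fix y assume "y \<in> cspan S"
    then obtain F c where "finite F" "F \<subseteq> S" "y = (\<Sum>s\<in>F. c s *\<^sub>C s)" unfolding cspan_def by blast
    moreover have "(\<Sum>s\<in>F. c s *\<^sub>C T s) = 0"
      by (rule sum.neutral) (use \<open>F \<subseteq> S\<close> assms(3) clinear_zero[OF assms(1)] assms(1) in \<open>auto simp: clinear_def scaleC_zero_right\<close>)
    ultimately show "y \<in> {x. T x = 0}" using clinear_sum[OF assms(1)] by simp
  qed
  moreover have "closed {x. T x = 0}"
    by (rule closed_Collect_eq[OF assms(2) continuous_on_const])
  ultimately have "closure (cspan S) \<subseteq> {x. T x = 0}" by (rule closure_minimal)
  thus ?thesis using assms(4) by auto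
qed

lemma part1:
  fixes M :: "'x measure"
    and I :: "'x set \<Rightarrow> 'a::cstar_algebra \<Rightarrow> 'h::chilbert \<Rightarrow> 'h"
    and \<pi> :: "'a \<Rightarrow> 'k::chilbert \<Rightarrow> 'k"
    and E :: "'x set \<Rightarrow> 'k \<Rightarrow> 'k"
    and V :: "'h \<Rightarrow> 'k"
  assumes mb: "minimal_bidilation M I \<pi> E V" and A: "A \<in> sets M"
  shows "I A = (\<lambda>a x. 0) \<longleftrightarrow> piE \<pi> E A = (\<lambda>a x. 0)"
proof -
  have sh: "star_hom \<pi>" and sm: "spectral_measure M E"
    and comm: "\<And>B a. B \<in> sets M \<Longrightarrow> \<pi> a \<circ> E B = E B \<circ> \<pi> a"
    and dil: "\<And>B a h k. B \<in> sets M \<Longrightarrow> cinner h (I B a k) = cinner (V h) (\<pi> a (E B (V k)))"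
    and dense: "closure (cspan {\<pi> a (E B (V h)) | a B h. B \<in> sets M}) = UNIV"
    using mb unfolding minimal_bidilation_def by auto
  have pibo: "\<And>a. bounded_op (\<pi> a)" and pimul: "\<And>a b. \<pi> (a * b) = \<pi> a \<circ> \<pi> b"
    and piadj: "\<And>a x y. cinner (\<pi> a x) y = cinner x (\<pi> (cstar a) y)"
    using sh unfolding star_hom_def by auto
  have Ebo: "\<And>B. B \<in> sets M \<Longrightarrow> bounded_op (E B)"
    and Eid: "\<And>B. B \<in> sets M \<Longrightarrow> E B \<circ> E B = E B"
    and Eadj: "\<And>B x y. B \<in> sets M \<Longrightarrow> cinner (E B x) y = cinner x (E B y)"
    and Eint: "\<And>B C. B \<in> sets M \<Longrightarrow> C \<in> sets M \<Longrightarrow> E (B \<inter> C) = E B \<circ> E C"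
    using sm unfolding spectral_measure_def by auto
  have commx: "\<And>B a x. B \<in> sets M \<Longrightarrow> \<pi> a (E B x) = E B (\<pi> a x)"
    using comm by (metis comp_apply)
  show ?thesis
  proof
    assume I0: "I A = (\<lambda>a x. 0)"
    have z1: "\<pi> c (E A (V h)) = 0" for c h
    proof -
      let ?y = "\<pi> c (E A (V h))"
      have "cinner ?y ?y = cinner (E A (V h)) (\<pi> (cstar c) (\<pi> c (E A (V h))))" by (rule piadj)
      also have "\<dots> = cinner (E A (V h)) (\<pi> (cstar c * c) (E A (V h)))" by (simp add: pimul)
      also have "\<dots> = cinner (V h) (E A (\<pi> (cstar c * c) (E A (V h))))" by (rule Eadj[OF A])
      also have "\<dots> = cinner (V h) (\<pi> (cstar c * c) (E A (E A (V h))))" by (simp add: commx[OF A])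
      also have "\<dots> = cinner (V h) (\<pi> (cstar c * c) (E A (V h)))" using Eid[OF A] by (metis comp_apply)
      also have "\<dots> = cinner h (I A (cstar c * c) h)" by (rule dil[OF A, symmetric])
      also have "\<dots> = 0" by (simp add: I0 cinner_zero_right)
      finally show ?thesis by (rule cinner_self_zero)
    qed
    show "piE \<pi> E A = (\<lambda>a x. 0)"
    proof (rule ext)
      fix a
      have cl: "clinear (\<pi> a \<circ> E A)"
        using pibo[of a] Ebo[OF A] unfolding bounded_op_def clinear_def by simp
      have ct: "continuous_on UNIV (\<pi> a \<circ> E A)"
        using bounded_op_bounded_linear[OF pibo[of a]] bounded_op_bounded_linear[OF Ebo[OF A]]
        by (intro continuous_on_compose linear_continuous_on) (auto intro: linear_continuous_on)
      have "\<pi> a \<circ> E A = (\<lambda>x. 0)"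
      proof (rule bounded_op_zero[OF cl ct _ dense])
        fix x assume "x \<in> {\<pi> a (E B (V h)) | a B h. B \<in> sets M}"
        then obtain b B h where B: "B \<in> sets M" and x: "x = \<pi> b (E B (V h))" by blast
        have "(\<pi> a \<circ> E A) x = \<pi> a (\<pi> b (E A (E B (V h))))" by (simp add: x commx[OF A])
        also have "\<dots> = \<pi> (a * b) (E (A \<inter> B) (V h))" by (simp add: pimul Eint[OF A B])
        also have "\<dots> = \<pi> (a * b) (E B (E A (V h)))" using Eint[OF B A] by (simp add: Int_commute)
        also have "\<dots> = E B (\<pi> (a * b) (E A (V h)))" by (rule commx[OF B])
        also have "\<dots> = 0" using z1 clinear_zero Ebo[OF B] unfolding bounded_op_def by metis
        finally show "(\<pi> a \<circ> E A) x = 0" .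
      qed
      thus "piE \<pi> E A a = (\<lambda>x. 0)" by (simp add: piE_def)
    qed
  next
    assume P0: "piE \<pi> E A = (\<lambda>a x. 0)"
    show "I A = (\<lambda>a x. 0)"
    proof (intro ext)
      fix a k
      have "\<pi> a (E A (V k)) = 0" using P0 unfolding piE_def by (metis comp_apply)
      hence "cinner h (I A a k) = cinner h 0" for h by (simp add: dil[OF A] cinner_zero_right)
      thus "I A a k = 0" by (rule cinner_ext)
    qed
  qed
qed

theorem proposition2p16:
  fixes M :: "'x measure"
    and I :: "'x set \<Rightarrow> 'a::cstar_algebra \<Rightarrow> 'h::chilbert \<Rightarrow> 'h"
    and \<pi> :: "'a \<Rightarrow> 'k::chilbert \<Rightarrow> 'k"
    and E :: "'x set \<Rightarrow> 'k \<Rightarrow> 'k"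
    and V :: "'h \<Rightarrow> 'k"
  assumes "cp_instrument M I"
    and "minimal_bidilation M I \<pi> E V"
  shows "(\<forall>A\<in>sets M. (I A = (\<lambda>a x. 0) \<longleftrightarrow> piE \<pi> E A = (\<lambda>a x. 0))) \<and>
         (\<forall>S\<in>sets M. (concentrated M I S \<longleftrightarrow> concentrated M (piE \<pi> E) S))"
proof (intro conjI ballI)
  fix A assume "A \<in> sets M"
  then show "I A = (\<lambda>a x. 0) \<longleftrightarrow> piE \<pi> E A = (\<lambda>a x. 0)" by (rule part1[OF assms(2)])
next
  fix S assume S: "S \<in> sets M"
  have caI: "\<And>a h k. count_add M (\<lambda>A. cinner h (I A a k))"
    using assms(1) unfolding cp_instrument_def by auto
  have sm: "spectral_measure M E" and sh: "star_hom \<pi>"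
    using assms(2) unfolding minimal_bidilation_def by auto
  have caE: "\<And>x y. count_add M (\<lambda>A. cinner x (E A y))"
    using sm unfolding spectral_measure_def by auto
  have piadd: "\<And>a x y. \<pi> a (x + y) = \<pi> a x + \<pi> a y"
    using sh unfolding star_hom_def bounded_op_def clinear_def by auto
  have splitI: "I A a k = I (A \<inter> S) a k + I (A - S) a k" if A: "A \<in> sets M" for A a k
  proof (rule cinner_ext)
    fix h
    have "A = (A \<inter> S) \<union> (A - S)" by blast
    hence "cinner h (I A a k) = cinner h (I (A \<inter> S) a k) + cinner h (I (A - S) a k)"
      using count_add_Un[OF caI[of h a k], of "A \<inter> S" "A - S"] A S by auto
    thus "cinner h (I A a k) = cinner h (I (A \<inter> S) a k + I (A - S) a k)"
      by (simp add: cinner_add_right)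
  qed
  have splitE: "E A x = E (A \<inter> S) x + E (A - S) x" if A: "A \<in> sets M" for A x
  proof (rule cinner_ext)
    fix h
    have "A = (A \<inter> S) \<union> (A - S)" by blast
    hence "cinner h (E A x) = cinner h (E (A \<inter> S) x) + cinner h (E (A - S) x)"
      using count_add_Un[OF caE[of h x], of "A \<inter> S" "A - S"] A S by auto
    thus "cinner h (E A x) = cinner h (E (A \<inter> S) x + E (A - S) x)"
      by (simp add: cinner_add_right)
  qed
  have cI: "concentrated M I S \<longleftrightarrow> (\<forall>A\<in>sets M. I (A - S) = (\<lambda>a x. 0))"
  proof
    assume c: "concentrated M I S"
    show "\<forall>A\<in>sets M. I (A - S) = (\<lambda>a x. 0)"
    proof (intro ballI ext)
      fix A a k assume A: "A \<in> sets M"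
      have "I A a k = I (A \<inter> S) a k" using c A unfolding concentrated_def by auto
      thus "I (A - S) a k = 0" using splitI[OF A, of a k] by simp
    qed
  next
    assume z: "\<forall>A\<in>sets M. I (A - S) = (\<lambda>a x. 0)"
    show "concentrated M I S" unfolding concentrated_def
    proof (intro ballI ext)
      fix A a k assume A: "A \<in> sets M"
      show "I A a k = I (A \<inter> S) a k" using splitI[OF A, of a k] z A by simp
    qed
  qed
  have cP: "concentrated M (piE \<pi> E) S \<longleftrightarrow> (\<forall>A\<in>sets M. piE \<pi> E (A - S) = (\<lambda>a x. 0))"
  proof
    assume c: "concentrated M (piE \<pi> E) S"
    show "\<forall>A\<in>sets M. piE \<pi> E (A - S) = (\<lambda>a x. 0)"
    proof (intro ballI ext)
      fix A a k assume A: "A \<in> sets M"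
      have "piE \<pi> E A a k = piE \<pi> E (A \<inter> S) a k" using c A unfolding concentrated_def by auto
      thus "piE \<pi> E (A - S) a k = 0" using splitE[OF A, of k] by (simp add: piE_def piadd)
    qed
  next
    assume z: "\<forall>A\<in>sets M. piE \<pi> E (A - S) = (\<lambda>a x. 0)"
    show "concentrated M (piE \<pi> E) S" unfolding concentrated_def
    proof (intro ballI ext)
      fix A a k assume A: "A \<in> sets M"
      have "\<pi> a (E (A - S) k) = 0" using z A unfolding piE_def by (metis comp_apply)
      thus "piE \<pi> E A a k = piE \<pi> E (A \<inter> S) a k" using splitE[OF A, of k] by (simp add: piE_def piadd)
    qed
  qed
  have "\<And>A. A \<in> sets M \<Longrightarrow> A - S \<in> sets M" using S by auto
  then show "concentrated M I S \<longleftrightarrow> concentrated M (piE \<pi> E) S"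
    unfolding cI cP using part1[OF assms(2)] by metis
qed

end
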